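(* Let $\mathcal M$ be a left $\mathcal A$-module and $(N_i)_{i\in I}$ a family of $R$-submodules of $\mathcal M$. Then for every choice of $\vartheta$: (i) $\bigcap_{i\in I}\sigma_\vartheta(N_i)\subseteq\sigma_\vartheta\big(\bigcap_{i\in I}N_i\big)$; (ii) if $I$ is finite, then $\bigcap_{i\in I}\tau_\vartheta(N_i)\subseteq\tau_\vartheta\big(\bigcap_{i\in I}N_i\big)$. In particular, if $u\in\mathcal M$ and $N_1,\dots,N_k$ are $R$-submodules with $u\in\tau_\vartheta(N_i)$ for all $i$, then $u\in\tau_\vartheta\big(\bigcap_{i=1}^kN_i\big)$.
   Context: $R$ is a unital commutative ring and $\mathcal A$ an associative unital (not necessarily commutative) $R$-algebra. The symbol $\vartheta$ ranges over "left", "right", "pre-two-sided", "two-sided". An $R$-submodule $J\subseteq\mathcal A$ is a left (resp. right; two-sided) Mathieu subspace of $\mathcal A$ if whenever $a\in\mathcal A$ satisfies $a^m\in J$ for all $m\ge1$, then for all $b,c\in\mathcal A$ there is $N_0$ with $ba^m\in J$ (resp. $a^mc\in J$; $ba^mc\in J$) for all $m\ge N_0$; pre-two-sided means both left and right. A $\vartheta$-ideal means a left/right/two-sided ideal accordingly, and a two-sided ideal for $\vartheta$ = pre-two-sided. For a left $\mathcal A$-module $\mathcal M$, $u\in\mathcal M$, $N\subseteq \mathcal M$, $(N:u)=\{a\in\mathcal A: au\in N\}$. For an $R$-submodule $N$ of $\mathcal M$, $\sigma_\vartheta(N)=\{u\in\mathcal M: (N:u)\text{ is a }\vartheta\text{-ideal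 of }\mathcal A\}$ and $\tau_\vartheta(N)=\{u\in\mathcal M: (N:u)\text{ is a }\vartheta\text{-Mathieu subspace of }\mathcal A\}$. *)

theory Defs
  imports Main
begin

text \<open>The algebra A is the whole type 'a (a unital ring), the base ring R is the whole
type 'r (a commutative unital ring), acting on A by sA; the left A-module M is the
whole type 'm (an abelian group) with action act. The R-module structure of M is the
one induced by r u = (r 1_A) u.\<close>

definition R_algebra :: "('r::comm_ring_1 \<Rightarrow> 'a::ring_1 \<Rightarrow> 'a) \<Rightarrow> bool" where
  "R_algebra sA \<longleftrightarrow>
     (\<forall>r a b. sA r (a + b) = sA r a + sA r b) \<and>
     (\<forall>r s a. sA (r + s) a = sA r a + sA s a) \<and>
     (\<forall>r s a. sA (r * s) a = sA r (sA s a)) \<and>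
     (\<forall>a. sA 1 a = a) \<and>
     (\<forall>r a b. sA r (a * b) = sA r a * b) \<and>
     (\<forall>r a b. sA r (a * b) = a * sA r b)"

definition left_module :: "('a::ring_1 \<Rightarrow> 'm::ab_group_add \<Rightarrow> 'm) \<Rightarrow> bool" where
  "left_module act \<longleftrightarrow>
     (\<forall>a u v. act a (u + v) = act a u + act a v) \<and>
     (\<forall>a b u. act (a + b) u = act a u + act b u) \<and>
     (\<forall>a b u. act (a * b) u = act a (act b u)) \<and>
     (\<forall>u. act 1 u = u)"

definition R_submodule_A :: "('r::comm_ring_1 \<Rightarrow> 'a::ring_1 \<Rightarrow> 'a) \<Rightarrow> 'a set \<Rightarrow> bool" where
  "R_submodule_A sA J \<longleftrightarrow> 0 \<in> J \<and> (\<forall>x\<in>J. \<forall>y\<in>J. x + y \<in> J) \<and> (\<forall>r. \<forall>x\<in>J. sA r x \<in> J)"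

definition R_submodule_M :: "('r::comm_ring_1 \<Rightarrow> 'a::ring_1 \<Rightarrow> 'a) \<Rightarrow> ('a \<Rightarrow> 'm::ab_group_add \<Rightarrow> 'm)
     \<Rightarrow> 'm set \<Rightarrow> bool" where
  "R_submodule_M sA act N \<longleftrightarrow> 0 \<in> N \<and> (\<forall>x\<in>N. \<forall>y\<in>N. x + y \<in> N) \<and>
     (\<forall>r. \<forall>x\<in>N. act (sA r 1) x \<in> N)"

datatype theta = Left | Right | PreTwoSided | TwoSided

definition add_subgroup :: "'a::ring_1 set \<Rightarrow> bool" where
  "add_subgroup I \<longleftrightarrow> 0 \<in> I \<and> (\<forall>x\<in>I. \<forall>y\<in>I. x + y \<in> I) \<and> (\<forall>x\<in>I. - x \<in> I)"

definition left_ideal :: "'a::ring_1 set \<Rightarrow> bool" where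
  "left_ideal I \<longleftrightarrow> add_subgroup I \<and> (\<forall>a. \<forall>x\<in>I. a * x \<in> I)"

definition right_ideal :: "'a::ring_1 set \<Rightarrow> bool" where
  "right_ideal I \<longleftrightarrow> add_subgroup I \<and> (\<forall>a. \<forall>x\<in>I. x * a \<in> I)"

definition two_sided_ideal :: "'a::ring_1 set \<Rightarrow> bool" where
  "two_sided_ideal I \<longleftrightarrow> left_ideal I \<and> right_ideal I"

fun theta_ideal :: "theta \<Rightarrow> 'a::ring_1 set \<Rightarrow> bool" where
  "theta_ideal Left I = left_ideal I"
| "theta_ideal Right I = right_ideal I"
| "theta_ideal PreTwoSided I = two_sided_ideal I"
| "theta_ideal TwoSided I = two_sided_ideal I"

definition left_Mathieu :: "('r::comm_ring_1 \<Rightarrow> 'a::ring_1 \<Rightarrow> 'a) \<Rightarrow> 'a set \<Rightarrow> bool" where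
  "left_Mathieu sA J \<longleftrightarrow> R_submodule_A sA J \<and>
     (\<forall>a. (\<forall>m::nat. m \<ge> 1 \<longrightarrow> a ^ m \<in> J) \<longrightarrow>
        (\<forall>b. \<exists>N0. \<forall>m\<ge>N0. b * a ^ m \<in> J))"

definition right_Mathieu :: "('r::comm_ring_1 \<Rightarrow> 'a::ring_1 \<Rightarrow> 'a) \<Rightarrow> 'a set \<Rightarrow> bool" where
  "right_Mathieu sA J \<longleftrightarrow> R_submodule_A sA J \<and>
     (\<forall>a. (\<forall>m::nat. m \<ge> 1 \<longrightarrow> a ^ m \<in> J) \<longrightarrow>
        (\<forall>c. \<exists>N0. \<forall>m\<ge>N0. a ^ m * c \<in> J))"

definition two_sided_Mathieu :: "('r::comm_ring_1 \<Rightarrow> 'a::ring_1 \<Rightarrow> 'a) \<Rightarrow> 'a set \<Rightarrow> bool" where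
  "two_sided_Mathieu sA J \<longleftrightarrow> R_submodule_A sA J \<and>
     (\<forall>a. (\<forall>m::nat. m \<ge> 1 \<longrightarrow> a ^ m \<in> J) \<longrightarrow>
        (\<forall>b c. \<exists>N0. \<forall>m\<ge>N0. b * a ^ m * c \<in> J))"

fun theta_Mathieu :: "('r::comm_ring_1 \<Rightarrow> 'a::ring_1 \<Rightarrow> 'a) \<Rightarrow> theta \<Rightarrow> 'a set \<Rightarrow> bool" where
  "theta_Mathieu sA Left J = left_Mathieu sA J"
| "theta_Mathieu sA Right J = right_Mathieu sA J"
| "theta_Mathieu sA PreTwoSided J = (left_Mathieu sA J \<and> right_Mathieu sA J)"
| "theta_Mathieu sA TwoSided J = two_sided_Mathieu sA J"

definition colon :: "('a::ring_1 \<Rightarrow> 'm \<Rightarrow> 'm) \<Rightarrow> 'm set \<Rightarrow> 'm \<Rightarrow> 'a set" where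
  "colon act N u = {a. act a u \<in> N}"

definition sigma :: "('a::ring_1 \<Rightarrow> 'm \<Rightarrow> 'm) \<Rightarrow> theta \<Rightarrow> 'm set \<Rightarrow> 'm set" where
  "sigma act th N = {u. theta_ideal th (colon act N u)}"

definition tau :: "('r::comm_ring_1 \<Rightarrow> 'a::ring_1 \<Rightarrow> 'a) \<Rightarrow> ('a \<Rightarrow> 'm \<Rightarrow> 'm) \<Rightarrow> theta
     \<Rightarrow> 'm set \<Rightarrow> 'm set" where
  "tau sA act th N = {u. theta_Mathieu sA th (colon act N u)}"

end

theory Submission
  imports Defs
begin

lemma colon_Inter: "colon act (\<Inter>i\<in>I. N i) u = (\<Inter>i\<in>I. colon act (N i) u)"
  by (auto simp: colon_def)

lemma sub_UNIV: "R_submodule_A sA UNIV" by (simp add: R_submodule_A_def)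
lemma sub_Int: "R_submodule_A sA A \<Longrightarrow> R_submodule_A sA B \<Longrightarrow> R_submodule_A sA (A \<inter> B)"
  by (simp add: R_submodule_A_def)

lemma lM_Int:
  assumes "left_Mathieu sA A" "left_Mathieu sA B" shows "left_Mathieu sA (A \<inter> B)"
  unfolding left_Mathieu_def
proof (intro conjI allI impI)
  show "R_submodule_A sA (A \<inter> B)" using assms sub_Int left_Mathieu_def by blast
  fix a b assume h: "\<forall>m::nat. m \<ge> 1 \<longrightarrow> a ^ m \<in> A \<inter> B"
  obtain N1 where 1: "\<forall>m\<ge>N1. b * a ^ m \<in> A" using assms(1) h unfolding left_Mathieu_def by blast
  obtain N2 where 2: "\<forall>m\<ge>N2. b * a ^ m \<in> B" using assms(2) h unfolding left_Mathieu_def by blast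
  show "\<exists>N0. \<forall>m\<ge>N0. b * a ^ m \<in> A \<inter> B" using 1 2 by (intro exI[of _ "max N1 N2"]) auto
qed

lemma rM_Int:
  assumes "right_Mathieu sA A" "right_Mathieu sA B" shows "right_Mathieu sA (A \<inter> B)"
  unfolding right_Mathieu_def
proof (intro conjI allI impI)
  show "R_submodule_A sA (A \<inter> B)" using assms sub_Int right_Mathieu_def by blast
  fix a b assume h: "\<forall>m::nat. m \<ge> 1 \<longrightarrow> a ^ m \<in> A \<inter> B"
  obtain N1 where 1: "\<forall>m\<ge>N1. a ^ m * b \<in> A" using assms(1) h unfolding right_Mathieu_def by blast
  obtain N2 where 2: "\<forall>m\<ge>N2. a ^ m * b \<in> B" using assms(2) h unfolding right_Mathieu_def by blast
  show "\<exists>N0. \<forall>m\<ge>N0. a ^ m * b \<in> A \<inter> B" using 1 2 by (intro exI[of _ "max N1 N2"]) auto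
qed

lemma tM_Int:
  assumes "two_sided_Mathieu sA A" "two_sided_Mathieu sA B" shows "two_sided_Mathieu sA (A \<inter> B)"
  unfolding two_sided_Mathieu_def
proof (intro conjI allI impI)
  show "R_submodule_A sA (A \<inter> B)" using assms sub_Int two_sided_Mathieu_def by blast
  fix a b c assume h: "\<forall>m::nat. m \<ge> 1 \<longrightarrow> a ^ m \<in> A \<inter> B"
  obtain N1 where 1: "\<forall>m\<ge>N1. b * a ^ m * c \<in> A" using assms(1) h unfolding two_sided_Mathieu_def by blast
  obtain N2 where 2: "\<forall>m\<ge>N2. b * a ^ m * c \<in> B" using assms(2) h unfolding two_sided_Mathieu_def by blast
  show "\<exists>N0. \<forall>m\<ge>N0. b * a ^ m * c \<in> A \<inter> B" using 1 2 by (intro exI[of _ "max N1 N2"]) auto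
qed

lemma thM_Int: "theta_Mathieu sA th A \<Longrightarrow> theta_Mathieu sA th B \<Longrightarrow> theta_Mathieu sA th (A \<inter> B)"
  by (cases th) (auto intro: lM_Int rM_Int tM_Int)

lemma thM_UNIV: "theta_Mathieu sA th UNIV"
  by (cases th) (auto simp: left_Mathieu_def right_Mathieu_def two_sided_Mathieu_def sub_UNIV)

lemma thM_Inter:
  assumes "finite I" "\<forall>i\<in>I. theta_Mathieu sA th (J i)"
  shows "theta_Mathieu sA th (\<Inter>i\<in>I. J i)"
  using assms by (induction I rule: finite_induct) (auto intro: thM_Int thM_UNIV)

lemma ideal_Inter:
  assumes "\<forall>i\<in>I. theta_ideal th (J i)"
  shows "theta_ideal th (\<Inter>i\<in>I. J i)"
  using assms by (cases th) (auto simp: left_ideal_def right_ideal_def two_sided_ideal_def add_subgroup_def)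

lemma tau_Inter:
  assumes "finite I" shows "(\<Inter>i\<in>I. tau sA act th (N i)) \<subseteq> tau sA act th (\<Inter>i\<in>I. N i)"
  unfolding tau_def colon_Inter using thM_Inter[OF assms] by auto

theorem proposition3p7:
  fixes sA :: "'r::comm_ring_1 \<Rightarrow> 'a::ring_1 \<Rightarrow> 'a"
    and act :: "'a \<Rightarrow> 'm::ab_group_add \<Rightarrow> 'm"
    and I :: "'i set" and N :: "'i \<Rightarrow> 'm set"
  assumes alg: "R_algebra sA"
    and modl: "left_module act"
    and subm: "\<forall>i\<in>I. R_submodule_M sA act (N i)"
  shows "(\<forall>th. (\<Inter>i\<in>I. sigma act th (N i)) \<subseteq> sigma act th (\<Inter>i\<in>I. N i))
       \<and> (finite I \<longrightarrow> (\<forall>th. (\<Inter>i\<in>I. tau sA act th (N i)) \<subseteq> tau sA act th (\<Inter>i\<in>I. N i)))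
       \<and> (\<forall>th (k::nat) (Ns :: nat \<Rightarrow> 'm set) u.
            (\<forall>i\<in>{1..k}. R_submodule_M sA act (Ns i)) \<longrightarrow>
            (\<forall>i\<in>{1..k}. u \<in> tau sA act th (Ns i)) \<longrightarrow>
            u \<in> tau sA act th (\<Inter>i\<in>{1..k}. Ns i))"
proof (intro conjI allI impI)
  fix th
  show "(\<Inter>i\<in>I. sigma act th (N i)) \<subseteq> sigma act th (\<Inter>i\<in>I. N i)"
    unfolding sigma_def colon_Inter using ideal_Inter by auto
next
  fix th assume "finite I"
  then show "(\<Inter>i\<in>I. tau sA act th (N i)) \<subseteq> tau sA act th (\<Inter>i\<in>I. N i)" by (rule tau_Inter)
next
  fix th k and Ns :: "nat \<Rightarrow> 'm set" and u
  assume "\<forall>i\<in>{1..k}. u \<in> tau sA act th (Ns i)"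
  then show "u \<in> tau sA act th (\<Inter>i\<in>{1..k}. Ns i)"
    using tau_Inter[of "{1..k}" sA act th Ns] by auto
qed

end
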